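(* Let $s\in(0,1)$, $N>2s$, $p\in(2,2_s^* )$, $a\in\mathbb{R}^{N-1}$ and $\rho>0$. With $a_r=(a,r)$ and $\Psi_y$, $\beta$ as in the context, there is $r_3>0$ such that if $r\ge r_3$ then $$\langle\beta(\Psi_y),y\rangle>0\quad\text{for all } y\in\partial B_{r/2}(a_r).$$
   Context: $2_s^*=\frac{2N}{N-2s}$. $H^s(\mathbb{R}^N)$ has norm $\|u\|_s^2=\int u^2+\iint_{\mathbb{R}^{2N}}\frac{|u(x)-u(z)|^2}{|x-z|^{N+2s}}dz\,dx$; $\varphi\in H^s(\mathbb{R}^N)$ is a minimizer of $M_\infty=\inf\{\|u\|_s^2:\int_{\mathbb{R}^N}|u|^p=1\}$ with $\int|\varphi|^p=1$. $\xi\in C^\infty([0,\infty))$, $0\le\xi\le1$, $\xi=0$ on $[0,\rho]$, $\xi=1$ on $[2\rho,\infty)$; $\eta\in C^\infty(\mathbb{R})$, $0\le\eta\le1$, $\eta=0$ on $(-\infty,0]$, $\eta=1$ on $[1,\infty)$. $f_y(x)=\xi(|x-a_r|)\eta(x_N)\varphi(x-y)$ and $\Psi_y=f_y/\|f_y\|_{L^p(\mathbb{R}^N)}$. $\chi(t)=1$ for $0\le t\le1$, $\chi(t)=1/t$ for $t\ge1$; $\beta(u)=\int_{\mathbb{R}^N}u^2(x)\chi(|x|)\,x\,dx\in\mathbb{R}^N$. *)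

theory Defs
  imports "HOL-Analysis.Analysis"
begin

definition crit_exp :: "real \<Rightarrow> nat \<Rightarrow> real" where
  "crit_exp s N = 2 * real N / (real N - 2 * s)"

definition gagliardo :: "real \<Rightarrow> ('a::euclidean_space \<Rightarrow> real) \<Rightarrow> ennreal" where
  "gagliardo s u = (\<integral>\<^sup>+ x. (\<integral>\<^sup>+ z. ennreal (\<bar>u x - u z\<bar>\<^sup>2 / norm (x - z) powr (real DIM('a) + 2 * s)) \<partial>lebesgue) \<partial>lebesgue)"

definition in_Hs :: "real \<Rightarrow> ('a::euclidean_space \<Rightarrow> real) \<Rightarrow> bool" where
  "in_Hs s u \<longleftrightarrow> u \<in> borel_measurable lebesgue
      \<and> (\<integral>\<^sup>+ x. ennreal ((u x)\<^sup>2) \<partial>lebesgue) < \<infinity> \<and> gagliardo s u < \<infinity>"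

definition Hs_norm2 :: "real \<Rightarrow> ('a::euclidean_space \<Rightarrow> real) \<Rightarrow> real" where
  "Hs_norm2 s u = enn2real (\<integral>\<^sup>+ x. ennreal ((u x)\<^sup>2) \<partial>lebesgue) + enn2real (gagliardo s u)"

definition Lp_int :: "real \<Rightarrow> ('a::euclidean_space \<Rightarrow> real) \<Rightarrow> ennreal" where
  "Lp_int p u = (\<integral>\<^sup>+ x. ennreal (\<bar>u x\<bar> powr p) \<partial>lebesgue)"

definition Lp_norm :: "real \<Rightarrow> ('a::euclidean_space \<Rightarrow> real) \<Rightarrow> real" where
  "Lp_norm p u = enn2real (Lp_int p u) powr (1 / p)"

definition is_minimizer :: "real \<Rightarrow> real \<Rightarrow> ('a::euclidean_space \<Rightarrow> real) \<Rightarrow> bool" where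
  "is_minimizer s p \<phi> \<longleftrightarrow> in_Hs s \<phi> \<and> Lp_int p \<phi> = 1
      \<and> (\<forall>u::'a \<Rightarrow> real. in_Hs s u \<and> Lp_int p u = 1 \<longrightarrow> Hs_norm2 s \<phi> \<le> Hs_norm2 s u)"

definition C_inf_on :: "real set \<Rightarrow> (real \<Rightarrow> real) \<Rightarrow> bool" where
  "C_inf_on S f \<longleftrightarrow> (\<forall>k. \<forall>x\<in>S. ((deriv ^^ k) f) differentiable (at x))"

definition chi :: "real \<Rightarrow> real" where
  "chi t = (if t \<le> 1 then 1 else 1 / t)"

definition beta :: "('a::euclidean_space \<Rightarrow> real) \<Rightarrow> 'a" where
  "beta u = (\<integral> x. ((u x)\<^sup>2 * chi (norm x)) *\<^sub>R x \<partial>lebesgue)"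

text \<open>f_y(x) = xi(|x - a_r|) eta(x_N) phi(x - y), where x_N = x \<bullet> e.\<close>
definition f_fun :: "(real \<Rightarrow> real) \<Rightarrow> (real \<Rightarrow> real) \<Rightarrow> ('a::euclidean_space \<Rightarrow> real)
    \<Rightarrow> 'a \<Rightarrow> 'a \<Rightarrow> 'a \<Rightarrow> 'a \<Rightarrow> real" where
  "f_fun \<xi> \<eta> \<phi> e ar y x = \<xi> (norm (x - ar)) * \<eta> (x \<bullet> e) * \<phi> (x - y)"

definition Psi :: "real \<Rightarrow> (real \<Rightarrow> real) \<Rightarrow> (real \<Rightarrow> real) \<Rightarrow> ('a::euclidean_space \<Rightarrow> real)
    \<Rightarrow> 'a \<Rightarrow> 'a \<Rightarrow> 'a \<Rightarrow> 'a \<Rightarrow> real" where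
  "Psi p \<xi> \<eta> \<phi> e ar y x = f_fun \<xi> \<eta> \<phi> e ar y x / Lp_norm p (f_fun \<xi> \<eta> \<phi> e ar y)"

end

theory Submission
  imports Defs
begin

lemma b2l: "(g::'a::euclidean_space \<Rightarrow> 'b::topological_space) \<in> borel_measurable borel \<Longrightarrow> g \<in> borel_measurable lebesgue"
  by (simp add: measurable_completion)

lemma transl_meas: "(\<lambda>x::'a::euclidean_space. t + x) \<in> lebesgue \<rightarrow>\<^sub>M lebesgue"
  using lebesgue_affine_measurable[of "\<lambda>_. 1" t] by (simp add: euclidean_representation)

lemma transl_distr: "distr lebesgue lebesgue (\<lambda>x::'a::euclidean_space. t + x) = lebesgue"
proof -
  have "lebesgue = density (distr lebesgue lebesgue (\<lambda>x::'a. t + x)) (\<lambda>_. 1)"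
    using lebesgue_affine_euclidean[of "\<lambda>_. 1" t] by (simp add: euclidean_representation)
  then show ?thesis by (simp add: density_1)
qed

lemma transl_meas': "(\<lambda>x::'a::euclidean_space. x - y) \<in> lebesgue \<rightarrow>\<^sub>M lebesgue"
  using transl_meas[of "-y"] by simp

lemma transl_distr': "distr lebesgue lebesgue (\<lambda>x::'a::euclidean_space. x - y) = lebesgue"
  using transl_distr[of "-y"] by simp

lemma transl_meas_fun:
  fixes g :: "'a::euclidean_space \<Rightarrow> real"
  assumes "g \<in> borel_measurable lebesgue"
  shows "(\<lambda>x. g (x - y)) \<in> borel_measurable lebesgue"
  using measurable_compose[OF transl_meas' assms] by simp

lemma transl_integrable:
  fixes g :: "'a::euclidean_space \<Rightarrow> real"
  assumes "integrable lebesgue g"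
  shows "integrable lebesgue (\<lambda>x. g (x - y))"
proof -
  have "integrable (distr lebesgue lebesgue (\<lambda>x. x - y)) g"
    using assms by (simp add: transl_distr')
  then show ?thesis
    by (subst (asm) integrable_distr_eq[OF transl_meas']) (auto simp: borel_measurable_integrable assms)
qed

lemma transl_integral:
  fixes g :: "'a::euclidean_space \<Rightarrow> real"
  assumes "g \<in> borel_measurable lebesgue"
  shows "integral\<^sup>L lebesgue (\<lambda>x. g (x - y)) = integral\<^sup>L lebesgue g"
  using integral_distr[OF transl_meas' assms, of y] by (simp add: transl_distr')

lemma transl_nn_integral:
  fixes g :: "'a::euclidean_space \<Rightarrow> ennreal"
  assumes "g \<in> borel_measurable lebesgue"
  shows "(\<integral>\<^sup>+ x. g (x - y) \<partial>lebesgue) = integral\<^sup>N lebesgue g"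
  using nn_integral_distr[OF transl_meas', of g y] assms by (simp add: transl_distr')

lemma cball_leb[measurable]: "cball (c::'a::euclidean_space) t \<in> sets lebesgue"
  using lmeasurable_cball fmeasurableD by blast

lemma id_leb[measurable]: "(\<lambda>x::'a::euclidean_space. x) \<in> borel_measurable lebesgue"
  by (rule b2l) simp

lemma chi_meas: "chi \<in> borel_measurable borel"
  unfolding chi_def[abs_def] by measurable

lemma chi_props: "0 \<le> chi t" "t \<ge> 0 \<Longrightarrow> chi t * t \<le> 1"
  unfolding chi_def by auto

theorem mainTheorem5:
  fixes s p \<rho> :: real
    and e a :: "'a::euclidean_space"
    and \<phi> :: "'a \<Rightarrow> real"
    and \<xi> \<eta> :: "real \<Rightarrow> real"
  assumes s: "0 < s" "s < 1"
    and N: "real DIM('a) > 2 * s"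
    and p: "2 < p" "p < crit_exp s DIM('a)"
    and e: "e \<in> Basis"
    and a: "a \<bullet> e = 0"
    and rho: "\<rho> > 0"
    and phi: "is_minimizer s p \<phi>"
    and xi: "C_inf_on {0<..} \<xi>" "\<forall>t\<ge>0. 0 \<le> \<xi> t \<and> \<xi> t \<le> 1"
        "\<forall>t\<in>{0..\<rho>}. \<xi> t = 0" "\<forall>t\<ge>2*\<rho>. \<xi> t = 1"
    and eta: "C_inf_on UNIV \<eta>" "\<forall>t. 0 \<le> \<eta> t \<and> \<eta> t \<le> 1"
        "\<forall>t\<le>0. \<eta> t = 0" "\<forall>t\<ge>1. \<eta> t = 1"
  shows "\<exists>r3>0. \<forall>r\<ge>r3. \<forall>y\<in>sphere (a + r *\<^sub>R e) (r / 2).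
           beta (Psi p \<xi> \<eta> \<phi> e (a + r *\<^sub>R e) y) \<bullet> y > 0"
proof -
  have ne: "norm e = 1" using e by simp
  from phi have phim[measurable]: "\<phi> \<in> borel_measurable lebesgue"
    and phi2: "(\<integral>\<^sup>+x. ennreal ((\<phi> x)\<^sup>2) \<partial>lebesgue) < \<infinity>" and phip: "Lp_int p \<phi> = 1"
    unfolding is_minimizer_def in_Hs_def by auto
  define w where "w z = (\<phi> z)\<^sup>2" for z
  have wm[measurable]: "w \<in> borel_measurable lebesgue" unfolding w_def[abs_def] by measurable
  have wint: "integrable lebesgue w"
    by (rule integrableI_bounded) (use phi2 in \<open>auto simp: w_def\<close>)
  define A where "A = integral\<^sup>L lebesgue w"
  have A_pos: "A > 0"
  proof (rule ccontr)
    assume "\<not> A > 0"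
    moreover have "A \<ge> 0" unfolding A_def w_def by simp
    ultimately have "A = 0" by simp
    then have "AE x in lebesgue. w x = 0"
      using integral_nonneg_eq_0_iff_AE[OF wint] unfolding A_def w_def by simp
    then have AE0: "AE x in lebesgue. ennreal (\<bar>\<phi> x\<bar> powr p) = 0"
      by eventually_elim (simp add: w_def)
    have "Lp_int p \<phi> = (\<integral>\<^sup>+x. 0 \<partial>lebesgue)"
      unfolding Lp_int_def using nn_integral_cong_AE[OF AE0] by simp
    then have "Lp_int p \<phi> = 0" by simp
    with phip show False by simp
  qed
  define gin where "gin n z = w z * indicator (cball 0 (real n)) z" for n :: nat and z
  have gin_meas[measurable]: "gin n \<in> borel_measurable lebesgue" for n
    unfolding gin_def[abs_def] by measurable
  have gin_int: "integrable lebesgue (gin n)" for n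
    using integrable_mult_indicator[OF _ wint, of "cball 0 (real n)"]
    by (simp add: gin_def[abs_def] mult.commute)
  have lim: "(\<lambda>n. integral\<^sup>L lebesgue (gin n)) \<longlonglongrightarrow> A"
    unfolding A_def
  proof (rule integral_dominated_convergence[where w=w])
    show "AE x in lebesgue. (\<lambda>i. gin i x) \<longlonglongrightarrow> w x"
    proof (rule AE_I2)
      fix x :: 'a
      have "eventually (\<lambda>i. gin i x = w x) sequentially"
        using eventually_ge_at_top[of "nat \<lceil>norm x\<rceil>"]
      proof eventually_elim
        case (elim i)
        then have "norm x \<le> real i"
          using real_nat_ceiling_ge[of "norm x"] by (meson of_nat_le_iff order_trans)
        then show ?case by (simp add: gin_def)
      qed
      then show "(\<lambda>i. gin i x) \<longlonglongrightarrow> w x" by (rule tendsto_eventually)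
    qed
    show "AE x in lebesgue. norm (gin i x) \<le> w x" for i
      by (auto simp: gin_def w_def indicator_def)
  qed (auto simp: wint)
  have "eventually (\<lambda>n. integral\<^sup>L lebesgue (gin n) > 2 * A / 3 \<and> n \<ge> 1) sequentially"
    using order_tendstoD(1)[OF lim, of "2*A/3"] A_pos eventually_ge_at_top[of 1]
    by (auto elim: eventually_conj)
  then obtain n where n: "integral\<^sup>L lebesgue (gin n) > 2 * A / 3" "n \<ge> 1"
    by (metis (no_types, lifting) eventually_sequentially order_refl)
  define T where "T = real n"
  define Ain where "Ain = integral\<^sup>L lebesgue (gin n)"
  have T1: "T \<ge> 1" using n by (simp add: T_def)
  have Ain: "Ain > 2 * A / 3" using n by (simp add: Ain_def)
  show ?thesis
  proof (intro exI[of _ "2*(3*T+2*\<rho>+1)"] conjI allI impI ballI)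
    show "0 < 2*(3*T+2*\<rho>+1)" using T1 rho by simp
    fix r y assume r: "2*(3*T+2*\<rho>+1) \<le> r" and y: "y \<in> sphere (a + r *\<^sub>R e) (r / 2)"
    define ar where "ar = a + r *\<^sub>R e"
    define f where "f = f_fun \<xi> \<eta> \<phi> e ar y"
    define R where "R = norm y"
    have f_eq: "f x = \<xi> (norm (x - ar)) * \<eta> (x \<bullet> e) * \<phi> (x - y)" for x
      by (simp add: f_def f_fun_def)
    have dy: "norm (y - ar) = r / 2" using y by (simp add: ar_def dist_norm norm_minus_commute)
    have ye: "y \<bullet> e \<ge> r / 2"
    proof -
      have "\<bar>(y - ar) \<bullet> e\<bar> \<le> norm (y - ar) * norm e" by (rule Cauchy_Schwarz_ineq2)
      then have "(y - ar) \<bullet> e \<ge> - (r/2)" using dy ne by simp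
      moreover have "ar \<bullet> e = r" using a ne e by (simp add: ar_def inner_add_left)
      ultimately show ?thesis by (simp add: inner_diff_left)
    qed
    have Rge: "R \<ge> r / 2"
    proof -
      have "\<bar>y \<bullet> e\<bar> \<le> norm y * norm e" by (rule Cauchy_Schwarz_ineq2)
      then show ?thesis using ye ne by (simp add: R_def)
    qed
    have f_bound: "(f x)\<^sup>2 \<le> w (x - y)" for x
    proof -
      have "0 \<le> \<xi> (norm (x - ar))" "\<xi> (norm (x - ar)) \<le> 1" using xi(2) by auto
      moreover have "0 \<le> \<eta> (x \<bullet> e)" "\<eta> (x \<bullet> e) \<le> 1" using eta(2) by auto
      ultimately have "\<bar>\<xi> (norm (x - ar)) * \<eta> (x \<bullet> e)\<bar> \<le> 1"
        by (simp add: abs_mult mult_le_one)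
      then have "(\<xi> (norm (x - ar)) * \<eta> (x \<bullet> e))\<^sup>2 \<le> 1"
        using abs_square_le_1 by blast
      then have "(\<xi> (norm (x - ar)) * \<eta> (x \<bullet> e))\<^sup>2 * (\<phi> (x - y))\<^sup>2 \<le> 1 * (\<phi> (x - y))\<^sup>2"
        by (intro mult_right_mono) auto
      then show ?thesis by (simp add: f_eq w_def power_mult_distrib)
    qed
    have f_in: "f x = \<phi> (x - y)" if xy: "norm (x - y) \<le> T" for x
    proof -
      have "\<bar>(x - y) \<bullet> e\<bar> \<le> norm (x - y) * norm e" by (rule Cauchy_Schwarz_ineq2)
      then have "x \<bullet> e \<ge> 1" using ye xy ne r rho by (simp add: inner_diff_left)
      then have "\<eta> (x \<bullet> e) = 1" using eta(4) by simp
      moreover have "norm (x - ar) \<ge> 2 * \<rho>"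
      proof -
        have "norm (y - ar) \<le> norm (x - ar) + norm (x - y)"
          by (metis norm_diff_triangle_le norm_minus_commute order_refl)
        then show ?thesis using dy xy r T1 by simp
      qed
      then have "\<xi> (norm (x - ar)) = 1" using xi(4) by simp
      ultimately show ?thesis by (simp add: f_eq)
    qed
    have xi_cont: "continuous_on UNIV (\<lambda>t. \<xi> (max t \<rho>))"
    proof -
      have "continuous_on {0<..} \<xi>"
        using xi(1) unfolding C_inf_on_def
        by (metis (no_types, lifting) continuous_at_imp_continuous_on differentiable_imp_continuous_within funpow_0)
      then have "continuous_on {\<rho>..} \<xi>" by (rule continuous_on_subset) (use rho in auto)
      moreover have "continuous_on UNIV (\<lambda>t::real. max t \<rho>)" by (intro continuous_intros)
      ultimately show ?thesis
        by (rule continuous_on_compose2) auto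
    qed
    have xi_eq: "\<xi> (norm (x - ar)) = \<xi> (max (norm (x - ar)) \<rho>)" for x
      using xi(3) rho by (cases "norm (x - ar) \<le> \<rho>") (auto simp: max_def)
    have eta_cont: "continuous_on UNIV \<eta>"
      using eta(1) unfolding C_inf_on_def
      by (metis (no_types, lifting) continuous_at_imp_continuous_on differentiable_imp_continuous_within funpow_0 UNIV_I)
    have xim[measurable]: "(\<lambda>x. \<xi> (norm (x - ar))) \<in> borel_measurable lebesgue"
    proof -
      have "(\<lambda>x. \<xi> (max (norm (x - ar)) \<rho>)) \<in> borel_measurable borel"
        by (intro borel_measurable_continuous_onI continuous_on_compose2[OF xi_cont] continuous_intros) auto
      then show ?thesis by (simp add: xi_eq b2l)
    qed
    have etam[measurable]: "(\<lambda>x. \<eta> (x \<bullet> e)) \<in> borel_measurable lebesgue"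
      by (intro b2l borel_measurable_continuous_onI continuous_on_compose2[OF eta_cont] continuous_intros) auto
    have phiym[measurable]: "(\<lambda>x. \<phi> (x - y)) \<in> borel_measurable lebesgue"
      by (rule transl_meas_fun[OF phim])
    have fm[measurable]: "f \<in> borel_measurable lebesgue"
      unfolding f_eq[abs_def] by measurable
    have Rpos: "R \<ge> 3 * T + 1" using Rge r rho by simp
    define c where "c = Lp_norm p f"
    have fle: "Lp_int p f \<le> 1"
    proof -
      have "Lp_int p f \<le> (\<integral>\<^sup>+ x. ennreal (\<bar>\<phi> (x - y)\<bar> powr p) \<partial>lebesgue)"
        unfolding Lp_int_def
      proof (rule nn_integral_mono)
        fix x
        have "\<bar>f x\<bar> \<le> \<bar>\<phi> (x - y)\<bar>" using f_bound[of x] by (simp add: abs_le_square_iff w_def)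
        then show "ennreal (\<bar>f x\<bar> powr p) \<le> ennreal (\<bar>\<phi> (x - y)\<bar> powr p)"
          using p by (intro ennreal_leI powr_mono2) auto
      qed
      also have "\<dots> = Lp_int p \<phi>"
        unfolding Lp_int_def by (rule transl_nn_integral[where g="\<lambda>z. ennreal (\<bar>\<phi> z\<bar> powr p)"]) measurable
      finally show ?thesis using phip by simp
    qed
    have fne: "Lp_int p f \<noteq> 0"
    proof
      assume f0: "Lp_int p f = 0"
      define P where "P z = ennreal (\<bar>\<phi> z\<bar> powr p * indicator (cball 0 (real n)) z)" for z
      have Pm[measurable]: "P \<in> borel_measurable lebesgue" unfolding P_def[abs_def] by measurable
      have "(\<integral>\<^sup>+ x. P (x - y) \<partial>lebesgue) \<le> Lp_int p f"
        unfolding Lp_int_def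
      proof (rule nn_integral_mono)
        fix x
        show "P (x - y) \<le> ennreal (\<bar>f x\<bar> powr p)"
        proof (cases "norm (x - y) \<le> T")
          case True
          then show ?thesis using f_in[OF True] by (simp add: P_def T_def)
        next
          case False
          then show ?thesis by (simp add: P_def T_def)
        qed
      qed
      then have "integral\<^sup>N lebesgue P = 0" using f0 transl_nn_integral[OF Pm, of y] by simp
      then have "AE z in lebesgue. P z = 0" by (simp add: nn_integral_0_iff_AE)
      then have "AE z in lebesgue. gin n z = 0"
        by eventually_elim (auto simp: P_def gin_def w_def indicator_def split: if_splits)
      then have "Ain = 0" unfolding Ain_def by (rule integral_eq_zero_AE)
      with Ain A_pos show False by simp
    qed
    have c_pos: "c > 0"
    proof -
      have "enn2real (Lp_int p f) > 0"
      proof -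
        have "Lp_int p f < top" by (rule order_le_less_trans[OF fle]) simp
        moreover have "0 < Lp_int p f" using fne by (simp add: zero_less_iff_neq_zero)
        ultimately show ?thesis by (simp add: enn2real_positive_iff)
      qed
      then show ?thesis unfolding c_def Lp_norm_def by simp
    qed
    define \<Psi> where "\<Psi> = Psi p \<xi> \<eta> \<phi> e ar y"
    have \<Psi>_eq: "\<Psi> = (\<lambda>x. f x / c)"
      by (rule ext) (simp add: \<Psi>_def Psi_def f_def c_def)
    have \<Psi>m[measurable]: "\<Psi> \<in> borel_measurable lebesgue" unfolding \<Psi>_eq by measurable
    have chim[measurable]: "(\<lambda>x::'a. chi (norm x)) \<in> borel_measurable lebesgue"
      by (intro b2l measurable_compose[OF _ chi_meas]) simp
    define wy where "wy x = w (x - y) / c\<^sup>2" for x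
    have wyint: "integrable lebesgue wy"
      unfolding wy_def by (intro integrable_divide transl_integrable wint)
    define V where "V x = ((\<Psi> x)\<^sup>2 * chi (norm x)) *\<^sub>R x" for x
    have Vm[measurable]: "V \<in> borel_measurable lebesgue" unfolding V_def[abs_def] by measurable
    have Vint: "integrable lebesgue V"
    proof (rule Bochner_Integration.integrable_bound[OF wyint Vm], rule AE_I2)
      fix x
      have "norm (V x) = (\<Psi> x)\<^sup>2 * (chi (norm x) * norm x)"
        using chi_props(1)[of "norm x"] by (simp add: V_def)
      also have "\<dots> \<le> (\<Psi> x)\<^sup>2 * 1"
        by (intro mult_left_mono chi_props(2)) auto
      also have "\<dots> \<le> wy x"
        using f_bound[of x] c_pos by (simp add: \<Psi>_eq wy_def power_divide divide_right_mono)
      finally show "norm (V x) \<le> norm (wy x)" by simp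
    qed
    define h where "h x = (\<Psi> x)\<^sup>2 * chi (norm x) * (x \<bullet> y)" for x
    have beta_eq: "beta \<Psi> \<bullet> y = integral\<^sup>L lebesgue h"
    proof -
      have "integral\<^sup>L lebesgue (\<lambda>x. V x \<bullet> y) = integral\<^sup>L lebesgue V \<bullet> y"
        by (rule integral_inner_left) (simp add: Vint)
      moreover have "(\<lambda>x. V x \<bullet> y) = h" by (rule ext) (simp add: V_def h_def)
      ultimately show ?thesis by (simp add: beta_def V_def[abs_def])
    qed
    have hint: "integrable lebesgue h"
    proof -
      have "integrable lebesgue (\<lambda>x. V x \<bullet> y)" using Vint by (rule integrable_inner_left)
      moreover have "(\<lambda>x. V x \<bullet> y) = h" by (rule ext) (simp add: V_def h_def)
      ultimately show ?thesis by simp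
    qed
    define L0 where "L0 x = (R/2) * gin n (x - y) - R * (w (x - y) - gin n (x - y))" for x
    define L where "L x = L0 x / c\<^sup>2" for x
    have L0int: "integrable lebesgue L0"
      unfolding L0_def[abs_def]
      using transl_integrable[OF wint, of y] transl_integrable[OF gin_int[of n], of y]
      by (intro Bochner_Integration.integrable_diff Bochner_Integration.integrable_mult_right) auto
    have Lint: "integrable lebesgue L" unfolding L_def[abs_def] by (intro integrable_divide L0int)
    have L0val: "integral\<^sup>L lebesgue L0 = (R/2) * Ain - R * (A - Ain)"
    proof -
      have "integral\<^sup>L lebesgue L0 = (R/2) * integral\<^sup>L lebesgue (\<lambda>x. gin n (x - y))
          - R * (integral\<^sup>L lebesgue (\<lambda>x. w (x - y)) - integral\<^sup>L lebesgue (\<lambda>x. gin n (x - y)))"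
        unfolding L0_def[abs_def]
        using transl_integrable[OF wint, of y] transl_integrable[OF gin_int, of n y]
        by (simp add: integral_diff integral_mult_right)
      then show ?thesis
        by (simp add: transl_integral[OF wm] transl_integral[OF gin_meas] A_def Ain_def)
    qed
    have Lpos: "integral\<^sup>L lebesgue L > 0"
    proof -
      have "integral\<^sup>L lebesgue L = integral\<^sup>L lebesgue L0 / c\<^sup>2"
        unfolding L_def[abs_def] by simp
      moreover have "(R/2) * Ain - R * (A - Ain) = R * (3/2 * Ain - A)" by (simp add: algebra_simps)
      moreover have "R * (3/2 * Ain - A) > 0" using Rpos T1 Ain by (intro mult_pos_pos) auto
      ultimately show ?thesis using L0val c_pos by simp
    qed
    have key: "L0 x \<le> (f x)\<^sup>2 * chi (norm x) * (x \<bullet> y)" for x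
    proof (cases "norm (x - y) \<le> T")
      case True
      have g: "gin n (x - y) = w (x - y)" using True by (simp add: gin_def T_def)
      have fx: "(f x)\<^sup>2 = w (x - y)" using f_in[OF True] by (simp add: w_def)
      have "R \<le> norm x + norm (x - y)"
        unfolding R_def by (metis norm_triangle_sub add.commute norm_minus_commute)
      then have nx1: "norm x \<ge> 1" using True Rpos T1 by linarith
      have nx2: "norm x \<le> R + T"
        using norm_triangle_ineq[of "x - y" y] True unfolding R_def by simp
      have "\<bar>(x - y) \<bullet> y\<bar> \<le> norm (x - y) * norm y" by (rule Cauchy_Schwarz_ineq2)
      then have "\<bar>(x - y) \<bullet> y\<bar> \<le> T * R"
        using True unfolding R_def by (meson mult_right_mono norm_ge_zero order_trans)
      moreover have "x \<bullet> y = R\<^sup>2 - (- ((x - y) \<bullet> y))"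
        by (simp add: R_def inner_diff_left power2_norm_eq_inner)
      ultimately have xy: "x \<bullet> y \<ge> R\<^sup>2 - T * R" by linarith
      have "R * (R - 3 * T) \<ge> 0" using Rpos T1 by simp
      moreover have "R/2 * (R + T) = R\<^sup>2 - T * R - R * (R - 3 * T) / 2"
        by (simp add: field_simps power2_eq_square)
      ultimately have "R/2 * (R + T) \<le> R\<^sup>2 - T * R" by linarith
      moreover have "R/2 * norm x \<le> R/2 * (R + T)" using nx2 Rpos T1 by simp
      ultimately have "R/2 * norm x \<le> x \<bullet> y" using xy by linarith
      then have "R/2 \<le> chi (norm x) * (x \<bullet> y)"
      proof -
        have "chi (norm x) * (x \<bullet> y) = (x \<bullet> y) / norm x"
          using nx1 by (auto simp: chi_def)
        moreover have "R/2 \<le> (x \<bullet> y) / norm x"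
          using nx1 \<open>R/2 * norm x \<le> x \<bullet> y\<close> by (subst pos_le_divide_eq) auto
        ultimately show ?thesis by simp
      qed
      then have "w (x - y) * (R/2) \<le> w (x - y) * (chi (norm x) * (x \<bullet> y))"
        by (intro mult_left_mono) (auto simp: w_def)
      then show ?thesis by (simp add: L0_def g fx mult.commute mult.left_commute)
    next
      case False
      have g: "gin n (x - y) = 0" using False by (simp add: gin_def T_def)
      have "\<bar>x \<bullet> y\<bar> \<le> norm x * R" unfolding R_def by (rule Cauchy_Schwarz_ineq2)
      then have "chi (norm x) * \<bar>x \<bullet> y\<bar> \<le> (chi (norm x) * norm x) * R"
        using chi_props(1)[of "norm x"] by (simp add: mult_left_mono mult.assoc)
      also have "\<dots> \<le> 1 * R" using chi_props(2)[of "norm x"] Rpos T1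
        by (intro mult_right_mono) auto
      finally have cb: "chi (norm x) * \<bar>x \<bullet> y\<bar> \<le> R" by simp
      have "chi (norm x) * (- \<bar>x \<bullet> y\<bar>) \<le> chi (norm x) * (x \<bullet> y)"
        using chi_props(1)[of "norm x"] by (intro mult_left_mono) auto
      then have "chi (norm x) * (x \<bullet> y) \<ge> - R" using cb by simp
      then have "(f x)\<^sup>2 * (- R) \<le> (f x)\<^sup>2 * (chi (norm x) * (x \<bullet> y))"
        by (intro mult_left_mono) auto
      moreover have "w (x - y) * (- R) \<le> (f x)\<^sup>2 * (- R)"
        using f_bound[of x] Rpos T1 by (intro mult_right_mono_neg) auto
      ultimately show ?thesis by (simp add: L0_def g mult.assoc mult.commute[of R])
    qed
    have "integral\<^sup>L lebesgue L \<le> integral\<^sup>L lebesgue h"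
    proof (rule integral_mono[OF Lint hint])
      fix x
      have "L0 x / c\<^sup>2 \<le> (f x)\<^sup>2 * chi (norm x) * (x \<bullet> y) / c\<^sup>2"
        using key[of x] c_pos by (simp add: divide_right_mono)
      then show "L x \<le> h x" by (simp add: L_def h_def \<Psi>_eq power_divide)
    qed
    with Lpos beta_eq show "beta (Psi p \<xi> \<eta> \<phi> e (a + r *\<^sub>R e) y) \<bullet> y > 0"
      by (simp add: \<Psi>_def ar_def)
  qed
qed

end
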